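(* Let $\mathbf B\in\mathcal B_n$ and let $|G\rangle=Z_{\mathbf B}|+\rangle^{\otimes n}$ be the associated graph state. Then there exist $\mathbf v\in\mathbb F_2^n$, an upper triangular matrix $\mathbf A\in GL_n(\mathbb F_2)$ and a reduced matrix $\mathbf B_{\mathrm{red}}\in\mathcal B_n$ such that $$|G\rangle=Z_{\mathbf v}\,X_{\mathbf A}\,Z_{\mathbf B_{\mathrm{red}}}\,|+\rangle^{\otimes n}.$$
   Context: Qubits are labelled $0,\dots,n-1$; the computational basis of $(\mathbb C^2)^{\otimes n}$ is $\{|x\rangle : x\in\mathbb F_2^n\}$. $|+\rangle=\frac1{\sqrt2}(|0\rangle+|1\rangle)$. For $\mathbf v\in\mathbb F_2^n$, $Z_{\mathbf v}$ is the unitary with $Z_{\mathbf v}|x\rangle=(-1)^{\sum_i v_ix_i}|x\rangle$ (a product of Pauli $Z$ gates). For $\mathbf A\in GL_n(\mathbb F_2)$, $X_{\mathbf A}$ is the unitary with $X_{\mathbf A}|x\rangle=|\mathbf Ax\rangle$ (realizable by CNOT gates). $\mathcal B_n$ is the set of symmetric $n\times n$ matrices over $\mathbb F_2$ with zero diagonal; for $\mathbf B=(b_{ij})\in\mathcal B_n$, $Z_{\mathbf B}|x\rangle=(-1)^{\sum_{i<j}b_{ij}x_ix_j}|x\rangle$ (a product of CZ gates). A matrix $\mathbf B\in\mathcal B_n$ is called reduced if each row and each column of $\mathbf B$ contains at most one non-zero entry. *)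

theory Defs
  imports "HOL-Analysis.Analysis" "HOL-Library.Z2"
begin

text \<open>Qubits are indexed by a finite linearly ordered type 'n (standing for {0,...,n-1}
  with its natural order); F_2 is the field bit; F_2^n is bit ^ 'n.
  An n-qubit state is given by its amplitude function (bit ^ 'n) \<Rightarrow> complex, i.e.
  psi = sum_x psi(x) |x>.\<close>

type_synonym 'n qstate = "(bit ^ 'n) \<Rightarrow> complex"

definition sgn_bit :: "bit \<Rightarrow> complex" where
  "sgn_bit b = (if b = 0 then 1 else -1)"

definition plus_state :: "'n::finite qstate" where
  "plus_state = (\<lambda>x. 1 / (complex_of_real (sqrt 2)) ^ CARD('n))"

definition Zv :: "bit ^ 'n::finite \<Rightarrow> 'n qstate \<Rightarrow> 'n qstate" where
  "Zv v psi = (\<lambda>x. sgn_bit (\<Sum>i\<in>UNIV. v $ i * x $ i) * psi x)"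

text \<open>X_A |x> = |Ax>, i.e. X_A = sum_x |Ax><x|\<close>
definition XA :: "bit ^ 'n ^ 'n \<Rightarrow> 'n::finite qstate \<Rightarrow> 'n qstate" where
  "XA A psi = (\<lambda>y. \<Sum>x\<in>{x. A *v x = y}. psi x)"

definition ZB :: "bit ^ ('n::{finite,linorder}) ^ ('n::{finite,linorder}) \<Rightarrow> ('n::{finite,linorder}) qstate \<Rightarrow> ('n::{finite,linorder}) qstate" where
  "ZB B psi = (\<lambda>x. sgn_bit (\<Sum>(i,j)\<in>{(i,j). i < j}. B $ i $ j * x $ i * x $ j) * psi x)"

definition in_Bn :: "bit ^ 'n ^ 'n \<Rightarrow> bool" where
  "in_Bn B \<longleftrightarrow> transpose B = B \<and> (\<forall>i. B $ i $ i = 0)"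

definition reduced :: "bit ^ 'n ^ 'n \<Rightarrow> bool" where
  "reduced B \<longleftrightarrow> (\<forall>i. card {j. B $ i $ j \<noteq> 0} \<le> 1) \<and> (\<forall>j. card {i. B $ i $ j \<noteq> 0} \<le> 1)"

definition upper_triangular :: "'a::zero ^ ('n::{finite,linorder}) ^ ('n::{finite,linorder}) \<Rightarrow> bool" where
  "upper_triangular A \<longleftrightarrow> (\<forall>i j. j < i \<longrightarrow> A $ i $ j = 0)"

end

theory Submission
  imports Defs
begin
lemma bit_add_self[simp]: "(x::bit) + x = 0" by (cases x) auto
lemma bit_mult_self[simp]: "(x::bit) * x = x" by (cases x) auto
lemma bit_tri: "(a::bit) + c = (a + b) + (b + c)" by (cases a; cases b; cases c) auto
lemma bit_solve: "(a::bit) + b = c \<Longrightarrow> a = c + b" by (cases a; cases b; cases c) auto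
lemma sgn_bit_add: "sgn_bit (p + q) = sgn_bit p * sgn_bit q" by (cases p; cases q) (auto simp: sgn_bit_def)
declare add_bit_eq_xor[simp del] mult_bit_eq_and[simp del]

definition qf :: "bit ^ ('n::{finite,linorder}) ^ ('n::{finite,linorder}) \<Rightarrow> bit ^ ('n::{finite,linorder}) \<Rightarrow> bit" where
  "qf B x = (\<Sum>(i,j)\<in>{(i,j). i < j}. B $ i $ j * x $ i * x $ j)"

definition lin :: "(bit ^ 'n::finite \<Rightarrow> bit) \<Rightarrow> bool" where
  "lin g \<longleftrightarrow> (\<exists>u. \<forall>x. g x = (\<Sum>i\<in>UNIV. u $ i * x $ i))"

lemma lin_add: "lin f \<Longrightarrow> lin g \<Longrightarrow> lin (\<lambda>x. f x + g x)"
proof -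
  assume "lin f" "lin g"
  then obtain u w where u: "\<forall>x. f x = (\<Sum>i\<in>UNIV. u $ i * x $ i)"
    and w: "\<forall>x. g x = (\<Sum>i\<in>UNIV. w $ i * x $ i)" unfolding lin_def by blast
  show ?thesis unfolding lin_def
    by (rule exI[of _ "u + w"]) (simp add: u w distrib_right sum.distrib)
qed

lemma lin_comp: "lin g \<Longrightarrow> lin (\<lambda>x. g (A *v x))"
proof -
  assume "lin g"
  then obtain u where u: "\<forall>x. g x = (\<Sum>i\<in>UNIV. u $ i * x $ i)" unfolding lin_def by blast
  show ?thesis unfolding lin_def
  proof (rule exI[of _ "\<chi> j. \<Sum>i\<in>UNIV. u $ i * A $ i $ j"], intro allI)
    fix x
    have "g (A *v x) = (\<Sum>i\<in>UNIV. \<Sum>j\<in>UNIV. u $ i * (A $ i $ j * x $ j))"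
      by (simp add: u matrix_vector_mult_def sum_distrib_left)
    also have "\<dots> = (\<Sum>j\<in>UNIV. \<Sum>i\<in>UNIV. u $ i * A $ i $ j * x $ j)"
      by (subst sum.swap) (simp add: mult.assoc)
    also have "\<dots> = (\<Sum>j\<in>UNIV. (\<chi> j. \<Sum>i\<in>UNIV. u $ i * A $ i $ j) $ j * x $ j)"
      by (simp add: sum_distrib_right)
    finally show "g (A *v x) = (\<Sum>j\<in>UNIV. (\<chi> j. \<Sum>i\<in>UNIV. u $ i * A $ i $ j) $ j * x $ j)" .
  qed
qed

lemma ut_mult: "upper_triangular (A::bit^('n::{finite,linorder})^('n::{finite,linorder})) \<Longrightarrow> upper_triangular B \<Longrightarrow> upper_triangular (A ** B)"
  unfolding upper_triangular_def matrix_matrix_mult_def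
proof (intro allI impI)
  fix i j :: 'n assume A: "\<forall>i j. j < i \<longrightarrow> A $ i $ j = 0" and B: "\<forall>i j. j < i \<longrightarrow> B $ i $ j = 0"
    and ji: "j < i"
  have "\<forall>k. A $ i $ k * B $ k $ j = 0"
  proof
    fix k show "A $ i $ k * B $ k $ j = 0"
      using A B ji by (cases "k < i") (auto simp: not_less dest: order.strict_trans2)
  qed
  then have "(\<Sum>k\<in>UNIV. A $ i $ k * B $ k $ j) = 0" by (intro sum.neutral) blast
  then show "(\<chi> i j. \<Sum>k\<in>UNIV. A $ i $ k * B $ k $ j) $ i $ j = 0" by simp
qed

definition qeq :: "bit ^ ('n::{finite,linorder}) ^ ('n::{finite,linorder}) \<Rightarrow> bit ^ ('n::{finite,linorder}) ^ ('n::{finite,linorder}) \<Rightarrow> bool" where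
  "qeq B B' \<longleftrightarrow> (\<exists>A. invertible A \<and> upper_triangular A \<and> lin (\<lambda>x. qf B (A *v x) + qf B' x))"

lemma qeq_refl: "qeq B B"
  unfolding qeq_def
proof (intro exI conjI)
  show "invertible (mat 1 :: bit^('n::{finite,linorder})^('n::{finite,linorder}))" unfolding invertible_def by auto
  show "upper_triangular (mat 1 :: bit^('n::{finite,linorder})^('n::{finite,linorder}))" unfolding upper_triangular_def mat_def by auto
  show "lin (\<lambda>x. qf B (mat 1 *v x) + qf B x)" unfolding lin_def
    by (rule exI[of _ 0]) simp
qed

lemma qeq_trans: "qeq B B1 \<Longrightarrow> qeq B1 B2 \<Longrightarrow> qeq B B2"
proof -
  assume "qeq B B1" "qeq B1 B2"
  then obtain A1 A2 where A1: "invertible A1" "upper_triangular A1" "lin (\<lambda>x. qf B (A1 *v x) + qf B1 x)"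
    and A2: "invertible A2" "upper_triangular A2" "lin (\<lambda>x. qf B1 (A2 *v x) + qf B2 x)"
    unfolding qeq_def by blast
  have "lin (\<lambda>x. (\<lambda>y. qf B (A1 *v y) + qf B1 y) (A2 *v x) + (qf B1 (A2 *v x) + qf B2 x))"
    by (rule lin_add[OF lin_comp[OF A1(3)] A2(3)])
  moreover have "(\<lambda>x. (\<lambda>y. qf B (A1 *v y) + qf B1 y) (A2 *v x) + (qf B1 (A2 *v x) + qf B2 x))
     = (\<lambda>x. qf B ((A1 ** A2) *v x) + qf B2 x)"
    by (auto simp: matrix_vector_mul_assoc[symmetric] bit_tri[symmetric])
  ultimately show ?thesis unfolding qeq_def
    using invertible_mult[OF A1(1) A2(1)] ut_mult[OF A1(2) A2(2)] by metis
qed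

lemma qf_alt: "qf C x = (\<Sum>i\<in>UNIV. \<Sum>j\<in>UNIV. if i < j then C$i$j * x$i * x$j else 0)"
proof -
  have "qf C x = (\<Sum>(i,j)\<in>Sigma UNIV (\<lambda>i. {j. i < j}). C$i$j * x$i * x$j)"
    unfolding qf_def by (rule sum.cong) auto
  also have "\<dots> = (\<Sum>i\<in>UNIV. \<Sum>j\<in>{j. i < j}. C$i$j * x$i * x$j)"
    by (rule sum.Sigma[symmetric]) auto
  also have "\<dots> = (\<Sum>i\<in>UNIV. \<Sum>j\<in>UNIV. if i < j then C$i$j * x$i * x$j else 0)"
    by (rule sum.cong[OF refl]) (simp add: sum.If_cases)
  finally show ?thesis .
qed

definition Rq :: "bit ^ ('n::{finite,linorder}) ^ ('n::{finite,linorder}) \<Rightarrow> bit ^ ('n::{finite,linorder}) \<Rightarrow> 'n \<Rightarrow> bit" where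
  "Rq C x a = (\<Sum>i\<in>UNIV-{a}. \<Sum>j\<in>UNIV-{a}. if i < j then C$i$j * x$i * x$j else 0)"

lemma qf_split:
  assumes sym: "\<And>i j. C$i$j = C$j$i"
  shows "qf C x = x$a * (\<Sum>k\<in>UNIV-{a}. C$a$k * x$k) + Rq C x a"
proof -
  define g where "g i j = (if i < j then C$i$j * x$i * x$j else 0)" for i j
  have rm: "\<And>f::'a \<Rightarrow> bit. sum f UNIV = f a + sum f (UNIV - {a})"
    by (rule sum.remove) auto
  have "qf C x = (\<Sum>i\<in>UNIV. \<Sum>j\<in>UNIV. g i j)" unfolding qf_alt g_def ..
  also have "\<dots> = (\<Sum>j\<in>UNIV. g a j) + (\<Sum>i\<in>UNIV-{a}. \<Sum>j\<in>UNIV. g i j)"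
    by (rule rm)
  also have "(\<Sum>j\<in>UNIV. g a j) = (\<Sum>j\<in>UNIV-{a}. g a j)"
    by (subst rm) (simp add: g_def)
  also have "(\<Sum>i\<in>UNIV-{a}. \<Sum>j\<in>UNIV. g i j) = (\<Sum>i\<in>UNIV-{a}. g i a + (\<Sum>j\<in>UNIV-{a}. g i j))"
    by (intro sum.cong refl rm)
  also have "\<dots> = (\<Sum>i\<in>UNIV-{a}. g i a) + Rq C x a"
    by (simp add: sum.distrib Rq_def g_def)
  finally have 1: "qf C x = ((\<Sum>k\<in>UNIV-{a}. g a k) + (\<Sum>k\<in>UNIV-{a}. g k a)) + Rq C x a"
    by (simp add: add.assoc)
  have "(\<Sum>k\<in>UNIV-{a}. g a k) + (\<Sum>k\<in>UNIV-{a}. g k a) = (\<Sum>k\<in>UNIV-{a}. g a k + g k a)"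
    by (simp add: sum.distrib)
  also have "\<dots> = (\<Sum>k\<in>UNIV-{a}. x$a * (C$a$k * x$k))"
  proof (intro sum.cong refl)
    fix k assume "k \<in> UNIV - {a}"
    then have "k \<noteq> a" by simp
    then show "g a k + g k a = x$a * (C$a$k * x$k)"
      using sym[of k a] by (cases "a < k") (auto simp: g_def mult_ac)
  qed
  also have "\<dots> = x$a * (\<Sum>k\<in>UNIV-{a}. C$a$k * x$k)"
    by (simp add: sum_distrib_left)
  finally show ?thesis using 1 by simp
qed


lemma Bn_sym: "in_Bn B \<Longrightarrow> B$i$j = B$j$i"
  unfolding in_Bn_def by (metis transpose_def vec_lambda_beta)

lemma Bn_diag: "in_Bn B \<Longrightarrow> B$i$i = 0"
  unfolding in_Bn_def by blast

definition Dm :: "'n \<Rightarrow> 'n \<Rightarrow> bit ^ ('n::{finite,linorder}) ^ ('n::{finite,linorder}) \<Rightarrow> bit ^ ('n::{finite,linorder}) ^ ('n::{finite,linorder})" where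
  "Dm a b B = (\<chi> i j. if i = j then 0 else (if i = b then B$a$j else 0) + (if j = b then B$i$a else 0))"

definition opB :: "'n \<Rightarrow> 'n \<Rightarrow> bit ^ ('n::{finite,linorder}) ^ ('n::{finite,linorder}) \<Rightarrow> bit ^ ('n::{finite,linorder}) ^ ('n::{finite,linorder})" where
  "opB a b B = B + Dm a b B"

definition Tm :: "'n \<Rightarrow> 'n \<Rightarrow> bit ^ ('n::{finite,linorder}) ^ ('n::{finite,linorder})" where
  "Tm a b = (\<chi> i j. (if i = j then 1 else 0) + (if i = a \<and> j = b then 1 else 0))"

lemma Dm_sym: "in_Bn B \<Longrightarrow> Dm a b B $ i $ j = Dm a b B $ j $ i"
  unfolding Dm_def using Bn_sym[of B] by auto

lemma Bn_op: assumes B: "in_Bn B" shows "in_Bn (opB a b B)"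
  unfolding in_Bn_def opB_def
proof
  show "transpose (B + Dm a b B) = B + Dm a b B"
    by (simp add: vec_eq_iff transpose_def Bn_sym[OF B, of _ _] Dm_sym[OF B, of a b])
  show "\<forall>i. (B + Dm a b B) $ i $ i = 0"
    by (simp add: Bn_diag[OF B] Dm_def)
qed

lemma op_row: "i \<noteq> b \<Longrightarrow> opB a b B $ i $ j = B$i$j + (if j = b then B$i$a else 0)"
  unfolding opB_def Dm_def by auto

lemma Tm_mul: "Tm a b *v x = (\<chi> i. x$i + (if i = a then x$b else 0))"
proof -
  have "(\<Sum>j\<in>UNIV. Tm a b $ i $ j * x $ j) = x$i + (if i = a then x$b else 0)" for i
  proof -
    have "(\<Sum>j\<in>UNIV. Tm a b $ i $ j * x $ j)
       = (\<Sum>j\<in>UNIV. (if j = i then x $ j else 0) + (if i = a \<and> j = b then x $ j else 0))"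
      by (intro sum.cong refl) (auto simp: Tm_def)
    also have "\<dots> = x$i + (if i = a then x$b else 0)"
      by (cases "i = a") (simp_all add: sum.distrib)
    finally show ?thesis .
  qed
  then show ?thesis by (simp add: vec_eq_iff matrix_vector_mult_def)
qed

lemma Tm_inv: assumes ab: "a \<noteq> b" shows "Tm a b ** Tm a b = mat 1"
proof -
  have "(\<Sum>k\<in>UNIV. Tm a b $ i $ k * Tm a b $ k $ j) = (if i = j then 1 else 0)" for i j
  proof -
    have "(\<Sum>k\<in>UNIV. Tm a b $ i $ k * Tm a b $ k $ j)
       = (\<Sum>k\<in>UNIV. (if k = i then Tm a b $ k $ j else 0) + (if i = a \<and> k = b then Tm a b $ k $ j else 0))"
      by (intro sum.cong refl) (auto simp: Tm_def)
    also have "\<dots> = Tm a b $ i $ j + (if i = a then Tm a b $ b $ j else 0)"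
      by (cases "i = a") (simp_all add: sum.distrib)
    also have "\<dots> = (if i = j then 1 else 0)"
      using ab by (auto simp: Tm_def)
    finally show ?thesis .
  qed
  then show ?thesis by (simp add: vec_eq_iff matrix_matrix_mult_def mat_def)
qed

lemma qf_add: "qf (B + D) x = qf B x + qf D x"
  unfolding qf_def by (simp add: distrib_right sum.distrib[symmetric] case_prod_beta)

lemma qf_T:
  assumes B: "in_Bn B" and ab: "a \<noteq> b"
  shows "qf B (Tm a b *v x) = qf (opB a b B) x + B$a$b * x$b"
proof -
  define y where "y = Tm a b *v x"
  have y: "\<And>k. y$k = x$k + (if k = a then x$b else 0)" unfolding y_def Tm_mul by simp
  define S where "S = (\<Sum>k\<in>UNIV-{a}. B$a$k * x$k)"
  define S' where "S' = (\<Sum>k\<in>UNIV-{b}. B$a$k * x$k)"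
  have rm: "\<And>f::'a \<Rightarrow> bit. \<And>c. sum f UNIV = f c + sum f (UNIV - {c})"
    by (rule sum.remove) auto
  have RR: "Rq B y a = Rq B x a" unfolding Rq_def by (intro sum.cong refl) (simp add: y)
  have SS: "(\<Sum>k\<in>UNIV-{a}. B$a$k * y$k) = S" unfolding S_def by (intro sum.cong refl) (simp add: y)
  have 1: "qf B y = y$a * S + Rq B x a"
    using qf_split[of B y a, OF Bn_sym[OF B]] RR SS by simp
  have 2: "qf B x = x$a * S + Rq B x a"
    using qf_split[of B x a, OF Bn_sym[OF B]] S_def by simp
  have RD: "Rq (Dm a b B) x b = 0" unfolding Rq_def
  proof (intro sum.neutral ballI)
    fix i j assume "i \<in> UNIV - {b}" "j \<in> UNIV - {b}"
    then show "(if i < j then Dm a b B $ i $ j * x $ i * x $ j else 0) = 0" by (simp add: Dm_def)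
  qed
  have SD: "(\<Sum>k\<in>UNIV-{b}. Dm a b B $ b $ k * x$k) = S'"
    unfolding S'_def Dm_def by (intro sum.cong refl) auto
  have 3: "qf (Dm a b B) x = x$b * S'"
    using qf_split[of "Dm a b B" x b, OF Dm_sym[OF B]] RD SD by simp
  have "(\<Sum>k\<in>UNIV. B$a$k * x$k) = S"
    unfolding S_def by (subst rm[of _ a]) (simp add: Bn_diag[OF B])
  moreover have "(\<Sum>k\<in>UNIV. B$a$k * x$k) = B$a$b * x$b + S'"
    unfolding S'_def by (rule rm)
  ultimately have SS': "S = B$a$b * x$b + S'" by simp
  have "qf B y = x$a * S + x$b * S + Rq B x a" using 1 y[of a] by (simp add: algebra_simps)
  also have "x$b * S = x$b * S' + B$a$b * x$b"
    unfolding SS' by (simp add: algebra_simps mult.assoc[symmetric])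
  finally show ?thesis unfolding opB_def qf_add 2 3 y_def by (simp add: algebra_simps)
qed

lemma qeq_op:
  assumes B: "in_Bn B" and ab: "a < b"
  shows "qeq B (opB a b B)"
  unfolding qeq_def
proof (intro exI conjI)
  show "invertible (Tm a b)" unfolding invertible_def using Tm_inv[of a b] ab by auto
  show "upper_triangular (Tm a b)" unfolding upper_triangular_def Tm_def using ab by auto
  have "\<forall>x. qf B (Tm a b *v x) + qf (opB a b B) x = (\<Sum>i\<in>UNIV. (\<chi> i. if i = b then B$a$b else 0) $ i * x $ i)"
  proof
    fix x
    have "qf B (Tm a b *v x) + qf (opB a b B) x = B$a$b * x$b"
      using qf_T[OF B, of a b x] ab by (simp add: algebra_simps)
    then show "qf B (Tm a b *v x) + qf (opB a b B) x = (\<Sum>i\<in>UNIV. (\<chi> i. if i = b then B$a$b else 0) $ i * x $ i)"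
      by (simp add: if_distrib if_distribR sum.delta cong: if_cong)
  qed
  then show "lin (\<lambda>x. qf B (Tm a b *v x) + qf (opB a b B) x)" unfolding lin_def by blast
qed


definition nbr :: "bit ^ ('n::{finite,linorder}) ^ ('n::{finite,linorder}) \<Rightarrow> 'n \<Rightarrow> 'n set" where
  "nbr B i = {j. B$i$j \<noteq> 0}"

lemma mem_nbr: "j \<in> nbr B i \<longleftrightarrow> B$i$j \<noteq> 0" unfolding nbr_def by simp

lemma nbr_sym: "in_Bn B \<Longrightarrow> j \<in> nbr B i \<longleftrightarrow> i \<in> nbr B j"
  unfolding mem_nbr using Bn_sym by metis

lemma nbr_irrefl: "in_Bn B \<Longrightarrow> i \<notin> nbr B i"
  unfolding mem_nbr using Bn_diag by metis

lemma phase: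
  fixes K :: "'n::{finite,linorder} set"
  shows "\<forall>B. in_Bn B \<longrightarrow> c \<in> nbr B a \<longrightarrow> K \<subseteq> nbr B c \<longrightarrow> a \<notin> K \<longrightarrow> (\<forall>k\<in>K. a < k)
     \<longrightarrow> M \<inter> nbr B a = {} \<longrightarrow> M \<inter> K = {} \<longrightarrow>
     (\<exists>B'. qeq B B' \<and> in_Bn B' \<and> nbr B' a = nbr B a \<and> nbr B' c = nbr B c - K \<and> (\<forall>m\<in>M. nbr B' m = nbr B m))"
  using finite[of K]
proof (induction K rule: finite_induct)
  case empty
  then show ?case using qeq_refl by blast
next
  case (insert k K)
  show ?case
  proof (intro allI impI)
    fix B :: "bit ^ ('n::{finite,linorder}) ^ ('n::{finite,linorder})"
    assume B: "in_Bn B" and ca: "c \<in> nbr B a" and Kc: "insert k K \<subseteq> nbr B c" and aK: "a \<notin> insert k K"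
      and lt: "\<forall>k'\<in>insert k K. a < k'" and Ma: "M \<inter> nbr B a = {}" and MK: "M \<inter> insert k K = {}"
    define B1 where "B1 = opB a k B"
    have ak: "a < k" using lt by simp
    have kc: "k \<in> nbr B c" using Kc by simp
    have ck: "c \<noteq> k" using kc nbr_irrefl[OF B] by metis
    have B1: "in_Bn B1" unfolding B1_def by (rule Bn_op[OF B])
    have q1: "qeq B B1" unfolding B1_def by (rule qeq_op[OF B ak])
    have n1a: "nbr B1 a = nbr B a"
      using ak Bn_diag[OF B, of a] by (auto simp: set_eq_iff mem_nbr B1_def op_row)
    have Bca: "B$c$a = 1" using ca nbr_sym[OF B] by (simp add: mem_nbr)
    have Bck: "B$c$k = 1" using kc by (simp add: mem_nbr)
    have n1c: "nbr B1 c = nbr B c - {k}"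
      using ck Bca Bck by (auto simp: set_eq_iff mem_nbr B1_def op_row)
    have n1m: "nbr B1 m = nbr B m" if m: "m \<in> M" for m
    proof -
      have "m \<noteq> k" using MK m by auto
      moreover have "B$m$a = 0" using Ma m nbr_sym[OF B, of m a] by (auto simp: mem_nbr)
      ultimately show ?thesis by (auto simp: set_eq_iff mem_nbr B1_def op_row)
    qed
    have "\<exists>B'. qeq B1 B' \<and> in_Bn B' \<and> nbr B' a = nbr B1 a \<and> nbr B' c = nbr B1 c - K \<and> (\<forall>m\<in>M. nbr B' m = nbr B1 m)"
    proof -
      have p1: "c \<in> nbr B1 a" using ca n1a by simp
      have p2: "K \<subseteq> nbr B1 c" using Kc insert.hyps(2) n1c by auto
      have p3: "a \<notin> K" using aK by simp
      have p4: "\<forall>k\<in>K. a < k" using lt by simp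
      have p5: "M \<inter> nbr B1 a = {}" using Ma n1a by simp
      have p6: "M \<inter> K = {}" using MK by auto
      show ?thesis by (rule insert.IH[rule_format, OF B1 p1 p2 p3 _ p5 p6]) (use p4 in blast)
    qed
    then obtain B' where B': "qeq B1 B'" "in_Bn B'" "nbr B' a = nbr B1 a" "nbr B' c = nbr B1 c - K"
      "\<forall>m\<in>M. nbr B' m = nbr B1 m" by blast
    show "\<exists>B'. qeq B B' \<and> in_Bn B' \<and> nbr B' a = nbr B a \<and> nbr B' c = nbr B c - insert k K \<and> (\<forall>m\<in>M. nbr B' m = nbr B m)"
    proof (intro exI[of _ B'] conjI ballI)
      show "qeq B B'" by (rule qeq_trans[OF q1 B'(1)])
      show "in_Bn B'" by (rule B'(2))
      show "nbr B' a = nbr B a" using B'(3) n1a by simp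
      show "nbr B' c = nbr B c - insert k K" using B'(4) n1c by auto
      fix m assume "m \<in> M" then show "nbr B' m = nbr B m" using B'(5) n1m by simp
    qed
  qed
qed


definition good :: "bit ^ ('n::{finite,linorder}) ^ ('n::{finite,linorder}) \<Rightarrow> 'n set \<Rightarrow> bool" where
  "good B M \<longleftrightarrow> (\<forall>m\<in>M. \<exists>p\<in>M. nbr B m = {p})"

lemma main:
  fixes M :: "'n::{finite,linorder} set"
  shows "\<forall>B. in_Bn B \<longrightarrow> good B M \<longrightarrow> (\<exists>B'. qeq B B' \<and> in_Bn B' \<and> reduced B')"
proof (induction "card (UNIV - M)" arbitrary: M rule: less_induct)
  case less
  show ?case
  proof (intro allI impI)
    fix B :: "bit ^ ('n::{finite,linorder}) ^ ('n::{finite,linorder})"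
    assume B: "in_Bn B" and G: "good B M"
    have nbrM: "x \<in> M" if "m \<in> M" "x \<in> nbr B m" for m x
      using G that unfolding good_def by fastforce
    define S where "S = {i. i \<notin> M \<and> nbr B i \<noteq> {}}"
    show "\<exists>B'. qeq B B' \<and> in_Bn B' \<and> reduced B'"
    proof (cases "S = {}")
      case True
      have c1: "card (nbr B i) \<le> 1" for i
      proof (cases "i \<in> M")
        case True
        then obtain p where "nbr B i = {p}" using G unfolding good_def by blast
        then show ?thesis by simp
      next
        case False
        then have "nbr B i = {}" using \<open>S = {}\<close> unfolding S_def by blast
        then show ?thesis by simp
      qed
      have "reduced B" unfolding reduced_def
      proof (intro conjI allI)
        fix i show "card {j. B $ i $ j \<noteq> 0} \<le> 1" using c1[of i] unfolding nbr_def .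
      next
        fix j have "{i. B $ i $ j \<noteq> 0} = nbr B j" unfolding nbr_def using Bn_sym[OF B] by metis
        then show "card {i. B $ i $ j \<noteq> 0} \<le> 1" using c1[of j] by simp
      qed
      then show ?thesis using B qeq_refl by blast
    next
      case False
      define i where "i = Min S"
      have iS: "i \<in> S" unfolding i_def using False by (intro Min_in) auto
      have imin: "i \<le> s" if "s \<in> S" for s unfolding i_def using that by (intro Min_le) auto
      have iM: "i \<notin> M" and ine: "nbr B i \<noteq> {}" using iS unfolding S_def by auto
      define j where "j = Min (nbr B i)"
      have ji: "j \<in> nbr B i" unfolding j_def using ine by (intro Min_in) auto
      have jmin: "j \<le> k" if "k \<in> nbr B i" for k unfolding j_def using that by (intro Min_le) auto
      have ij: "i \<in> nbr B j" using ji nbr_sym[OF B] by blast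
      have jM: "j \<notin> M" using nbrM[of j i] ij iM by blast
      have Mj: "M \<inter> nbr B j = {}" using nbrM nbr_sym[OF B] jM by blast
      have Mi: "M \<inter> nbr B i = {}" using nbrM nbr_sym[OF B] iM by blast
      have "j \<in> S" unfolding S_def using jM ij by auto
      then have "i \<le> j" by (rule imin)
      moreover have "i \<noteq> j" using ij nbr_irrefl[OF B] by blast
      ultimately have i_lt_j: "i < j" by simp
      have "\<exists>B1. qeq B B1 \<and> in_Bn B1 \<and> nbr B1 j = nbr B j \<and> nbr B1 i = nbr B i - (nbr B i - {j}) \<and> (\<forall>m\<in>M. nbr B1 m = nbr B m)"
      proof (rule phase[where K="nbr B i - {j}" and c=i and a=j and M=M, rule_format, OF B ij])
        show "nbr B i - {j} \<subseteq> nbr B i" by blast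
        show "j \<notin> nbr B i - {j}" by blast
        show "\<And>k. k \<in> nbr B i - {j} \<Longrightarrow> j < k" using jmin by force
        show "M \<inter> nbr B j = {}" by (rule Mj)
        show "M \<inter> (nbr B i - {j}) = {}" using Mi by blast
      qed
      then obtain B1 where B1: "qeq B B1" "in_Bn B1" "nbr B1 j = nbr B j" "nbr B1 i = nbr B i - (nbr B i - {j})"
        "\<forall>m\<in>M. nbr B1 m = nbr B m" by blast
      have n1i: "nbr B1 i = {j}" using B1(4) ji by blast
      have "\<exists>B2. qeq B1 B2 \<and> in_Bn B2 \<and> nbr B2 i = nbr B1 i \<and> nbr B2 j = nbr B1 j - (nbr B j - {i}) \<and> (\<forall>m\<in>M. nbr B2 m = nbr B1 m)"
      proof (rule phase[where K="nbr B j - {i}" and c=j and a=i and M=M, rule_format, OF B1(2)])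
        show "j \<in> nbr B1 i" using n1i by simp
        show "nbr B j - {i} \<subseteq> nbr B1 j" using B1(3) by blast
        show "i \<notin> nbr B j - {i}" by blast
        show "i < k" if k: "k \<in> nbr B j - {i}" for k
        proof -
          have "k \<notin> M" using Mj k by blast
          moreover have "j \<in> nbr B k" using k nbr_sym[OF B] by blast
          ultimately have "k \<in> S" unfolding S_def by blast
          then have "i \<le> k" by (rule imin)
          then show "i < k" using k by auto
        qed
        show "M \<inter> nbr B1 i = {}" using n1i jM by simp
        show "M \<inter> (nbr B j - {i}) = {}" using Mj by blast
      qed
      then obtain B2 where B2: "qeq B1 B2" "in_Bn B2" "nbr B2 i = nbr B1 i" "nbr B2 j = nbr B1 j - (nbr B j - {i})"
        "\<forall>m\<in>M. nbr B2 m = nbr B1 m" by blast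
      have n2i: "nbr B2 i = {j}" using B2(3) n1i by simp
      have n2j: "nbr B2 j = {i}" using B2(4) B1(3) ij by blast
      have n2m: "nbr B2 m = nbr B m" if "m \<in> M" for m using B2(5) B1(5) that by simp
      have G2: "good B2 (M \<union> {i, j})" unfolding good_def
      proof
        fix m assume m: "m \<in> M \<union> {i, j}"
        show "\<exists>p\<in>M \<union> {i, j}. nbr B2 m = {p}"
        proof (cases "m \<in> M")
          case True
          then obtain p where "p \<in> M" "nbr B m = {p}" using G unfolding good_def by blast
          then show ?thesis using n2m[OF True] by blast
        next
          case False
          then have "m = i \<or> m = j" using m by blast
          then show ?thesis using n2i n2j by blast
        qed
      qed
      have "UNIV - (M \<union> {i, j}) \<subset> UNIV - M" using iM by blast
      then have lt: "card (UNIV - (M \<union> {i, j})) < card (UNIV - M)" by (intro psubset_card_mono) auto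
      obtain B' where B': "qeq B2 B'" "in_Bn B'" "reduced B'"
        using less.hyps[OF lt, rule_format, OF B2(2) G2] by blast
      show ?thesis using qeq_trans[OF qeq_trans[OF B1(1) B2(1)] B'(1)] B'(2,3) by blast
    qed
  qed
qed

theorem theorem5p2:
  fixes B :: "bit ^ ('n::{finite,linorder}) ^ ('n::{finite,linorder})"
  assumes "in_Bn B"
  shows "\<exists>(v :: bit ^ ('n::{finite,linorder}))
           (A :: bit ^ ('n::{finite,linorder}) ^ ('n::{finite,linorder}))
           (Bred :: bit ^ ('n::{finite,linorder}) ^ ('n::{finite,linorder})).
           invertible A \<and> upper_triangular A \<and> in_Bn Bred \<and> reduced Bred \<and>
           ZB B plus_state = Zv v (XA A (ZB Bred plus_state))"
proof -
  have "good B {}" unfolding good_def by simp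
  then obtain Bred where R: "qeq B Bred" "in_Bn Bred" "reduced Bred"
    using main[of "{}", rule_format, OF assms] by blast
  then obtain A where A: "invertible A" "upper_triangular A" "lin (\<lambda>x. qf B (A *v x) + qf Bred x)"
    unfolding qeq_def by blast
  obtain A' where AA': "A ** A' = mat 1" "A' ** A = mat 1" using A(1) unfolding invertible_def by blast
  have "lin (\<lambda>y. (\<lambda>x. qf B (A *v x) + qf Bred x) (A' *v y))" by (rule lin_comp[OF A(3)])
  then obtain v where v: "\<And>y. qf B (A *v (A' *v y)) + qf Bred (A' *v y) = (\<Sum>i\<in>UNIV. v $ i * y $ i)"
    unfolding lin_def by auto
  have AA'y: "A *v (A' *v y) = y" for y by (simp add: matrix_vector_mul_assoc AA'(1))
  have qB: "qf B y = (\<Sum>i\<in>UNIV. v $ i * y $ i) + qf Bred (A' *v y)" for y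
    using v[of y] AA'y[of y] by (intro bit_solve) simp
  have pre: "{x. A *v x = y} = {A' *v y}" for y
  proof
    show "{x. A *v x = y} \<subseteq> {A' *v y}"
    proof
      fix x assume "x \<in> {x. A *v x = y}"
      then have "A' *v (A *v x) = A' *v y" by simp
      then show "x \<in> {A' *v y}" by (simp add: matrix_vector_mul_assoc AA'(2))
    qed
    show "{A' *v y} \<subseteq> {x. A *v x = y}" using AA'y by simp
  qed
  have "ZB B plus_state = Zv v (XA A (ZB Bred plus_state))"
  proof
    fix y
    show "ZB B plus_state y = Zv v (XA A (ZB Bred plus_state)) y"
      unfolding Zv_def XA_def pre
      by (simp add: ZB_def qf_def[symmetric] qB sgn_bit_add plus_state_def)
  qed
  then show ?thesis using A(1,2) R(2,3) by blast
qed

end
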